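(* Let $n\ge2$ and $P=(a_1,\dots,a_{n-1},0)$ with $0<a_i<\tfrac12$ for all $i\le n-1$. Then the vertices of $\mathcal R(P)$ are exactly the following points. (1) Standard vertices: for each labeled set $S\subset[\![n-1]\!]$ with $0\le K(S)\le1$, the points $v_S^\pm$ with coordinates $x_i=a_i-\tfrac12+\varepsilon_i$ for $i\in S$, $x_i=\tfrac12-a_i$ for $i\in\widetilde S$, and $x_n=\pm K(S)$ (if $K(S)=0$ then $v_S^+=v_S^-$). (2) Middle vertices: for each labeled set $S$ and $k\in S$ with $K(S)<0<K(S\setminus\{k\})$, the point $v^0_{S,k}$ with $x_i=a_i-\tfrac12+\varepsilon_i$ for $i\in S\setminus\{k\}$, $x_i=\tfrac12-a_i$ for $i\in\widetilde S$, $x_k=a_k-\tfrac12+\varepsilon_k-\frac{K(S)}{2a_k-\varepsilon_k}$, and $x_n=0$. (3) Truncating vertices: for each labeled set $S$ and $k\notin S$ together with a label $\varepsilon_k\in\{0,1\}$ such that $K(S\cup\{k\})<1<K(S)$, the points $v^\pm_{S,k}$ with $x_i=a_i-\tfrac12+\varepsilon_i$ for $i\in S$, $x_i=\tfrac12-a_i$ for $i\in\widetilde S\setminus\{k\}$, $x_k=a_k-\tfrac12+\varepsilon_k+\frac{1-K(S\cup\{k\})}{2a_k-\varepsilon_k}$, and $x_n=\pm1$. There are no other vertices of $\mathcal R(P)$.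
   Context: For $P=(a_1,\dots,a_{n-1},0)$ with $0<a_i<\tfrac12$, $\mathcal R(P)\subset\mathbb R^n$ is the polytope defined by the inequalities: $a_i-\tfrac12\le x_i\le a_i+\tfrac12$ for $1\le i\le n-1$; $-1\le x_n\le 1$; and for every $\delta=(\delta_1,\dots,\delta_{n-1})\in\{0,1\}^{n-1}$, $x_n\le\tfrac12+\sum_{i=1}^{n-1}(2a_i-\delta_i)(x_i-\tfrac12\delta_i)$ and $x_n\ge-\tfrac12-\sum_{i=1}^{n-1}(2a_i-\delta_i)(x_i-\tfrac12\delta_i)$. (This is the set of points $Q$ at least as close to $P$ as to any point of the $\sim$-orbit "neighbours" of $P$, where $\sim$ on $\mathbb R^n$ is generated by $x\sim x+e_i$, $i\le n-1$, and $(x_1,\dots,x_n)\sim(1-x_1,\dots,1-x_{n-1},x_n+1)$.) Write $[\![n-1]\!]=\{1,\dots,n-1\}$. A labeled set is a subset $S\subset[\![n-1]\!]$ together with a function $S\to\{0,1\}$, $i\mapsto\varepsilon_i$. For $0<a\le\tfrac12$ put $\Delta_a=a-2a^2=\tfrac18-2(a-\tfrac14)^2$; $\Delta(S)=\sum_{i\in S}\Delta_{a_i}$; $\widetilde S=[\![n-1]\!]\setminus S$; and $K(S)=\tfrac12-\Delta(S)+\Delta(\widetilde S)$ (depending only on the underlying set of $S$). *)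

theory Defs
  imports "HOL-Analysis.Analysis"
begin

text \<open>Points of R^n are represented as pairs (x, t) :: real^'m \<times> real, where the
  finite index type 'm plays the role of [[n-1]] (so n - 1 = CARD('m) \<ge> 1, n \<ge> 2)
  and t is the last coordinate x_n.  P = (a_1,...,a_{n-1},0) is given by a :: real^'m::finite.\<close>

definition RP :: "real^'m::finite \<Rightarrow> ((real^'m) \<times> real) set" where
  "RP a = {(x, t) | x t.
     (\<forall>i. a$i - 1/2 \<le> x$i \<and> x$i \<le> a$i + 1/2) \<and> -1 \<le> t \<and> t \<le> 1 \<and>
     (\<forall>\<delta>::'m \<Rightarrow> real. (\<forall>i. \<delta> i \<in> {0,1}) \<longrightarrow>
        t \<le> 1/2 + (\<Sum>i\<in>UNIV. (2 * a$i - \<delta> i) * (x$i - \<delta> i / 2)) \<and>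
        t \<ge> -1/2 - (\<Sum>i\<in>UNIV. (2 * a$i - \<delta> i) * (x$i - \<delta> i / 2)))}"

definition Delta_a :: "real \<Rightarrow> real" where
  "Delta_a b = b - 2 * b^2"

definition DeltaS :: "real^'m::finite \<Rightarrow> 'm set \<Rightarrow> real" where
  "DeltaS a S = (\<Sum>i\<in>S. Delta_a (a$i))"

definition KS :: "real^'m::finite \<Rightarrow> 'm set \<Rightarrow> real" where
  "KS a S = 1/2 - DeltaS a S + DeltaS a (UNIV - S)"

text \<open>A labeled set: a subset S with labels \<epsilon>_i \<in> {0,1} for i \<in> S
  (values of \<epsilon> outside S are irrelevant).\<close>
definition labeled :: "'m set \<Rightarrow> ('m \<Rightarrow> real) \<Rightarrow> bool" where
  "labeled S \<epsilon> \<longleftrightarrow> (\<forall>i\<in>S. \<epsilon> i \<in> {0,1})"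

definition base_coord :: "real^'m::finite \<Rightarrow> 'm set \<Rightarrow> ('m \<Rightarrow> real) \<Rightarrow> 'm \<Rightarrow> real" where
  "base_coord a S \<epsilon> i = (if i \<in> S then a$i - 1/2 + \<epsilon> i else 1/2 - a$i)"

definition standard_vertices :: "real^'m::finite \<Rightarrow> ((real^'m) \<times> real) set" where
  "standard_vertices a = {((\<chi> i. base_coord a S \<epsilon> i), s * KS a S) | S \<epsilon> s.
      labeled S \<epsilon> \<and> 0 \<le> KS a S \<and> KS a S \<le> 1 \<and> s \<in> {1, -1}}"

definition middle_vertices :: "real^'m::finite \<Rightarrow> ((real^'m) \<times> real) set" where
  "middle_vertices a = {((\<chi> i. if i = k then a$k - 1/2 + \<epsilon> k - KS a S / (2 * a$k - \<epsilon> k)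
                               else base_coord a S \<epsilon> i), 0) | S \<epsilon> k.
      labeled S \<epsilon> \<and> k \<in> S \<and> KS a S < 0 \<and> 0 < KS a (S - {k})}"

definition truncating_vertices :: "real^'m::finite \<Rightarrow> ((real^'m) \<times> real) set" where
  "truncating_vertices a = {((\<chi> i. if i = k then a$k - 1/2 + \<epsilon> k
                                 + (1 - KS a (insert k S)) / (2 * a$k - \<epsilon> k)
                               else base_coord a S \<epsilon> i), s) | S \<epsilon> k s.
      labeled S \<epsilon> \<and> k \<notin> S \<and> \<epsilon> k \<in> {0,1} \<and>
      KS a (insert k S) < 1 \<and> 1 < KS a S \<and> s \<in> {1, -1}}"

end

theory Submission
  imports Defs
begin


definition hh :: "real \<Rightarrow> real \<Rightarrow> real" where
  "hh b y = min (2*b*y) ((2*b-1)*(y-1/2))"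

lemma hh_concave:
  assumes "0 \<le> l" "l \<le> 1"
  shows "l * hh b y + (1-l) * hh b z \<le> hh b (l*y + (1-l)*z)"
proof -
  have 1: "l * hh b y + (1-l) * hh b z \<le> 2*b*(l*y + (1-l)*z)"
  proof -
    have "l * hh b y \<le> l * (2*b*y)" using assms by (intro mult_left_mono) (auto simp: hh_def)
    moreover have "(1-l) * hh b z \<le> (1-l) * (2*b*z)" using assms by (intro mult_left_mono) (auto simp: hh_def)
    moreover have "l * (2*b*y) + (1-l) * (2*b*z) = 2*b*(l*y + (1-l)*z)" by (simp add: algebra_simps)
    ultimately show ?thesis by linarith
  qed
  have 2: "l * hh b y + (1-l) * hh b z \<le> (2*b-1)*((l*y + (1-l)*z)-1/2)"
  proof -
    have "l * hh b y \<le> l * ((2*b-1)*(y-1/2))" using assms by (intro mult_left_mono) (auto simp: hh_def)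
    moreover have "(1-l) * hh b z \<le> (1-l) * ((2*b-1)*(z-1/2))" using assms by (intro mult_left_mono) (auto simp: hh_def)
    moreover have "l * ((2*b-1)*(y-1/2)) + (1-l) * ((2*b-1)*(z-1/2)) = (2*b-1)*((l*y + (1-l)*z)-1/2)" by (simp add: field_simps)
    ultimately show ?thesis by linarith
  qed
  show ?thesis using 1 2 by (simp add: hh_def)
qed

lemma hh_mid: "hh b (y+d) + hh b (y-d) \<le> 2 * hh b y"
proof -
  have "(1/2) * (y+d) + (1-1/2) * (y-d) = y" by (simp add: field_simps)
  then show ?thesis using hh_concave[of "1/2" b "y+d" "y-d"] by simp
qed

lemma hh_peak: "hh b (1/2-b+d) + hh b (1/2-b-d) = 2 * hh b (1/2-b) - \<bar>d\<bar>"
  by (cases "d \<ge> 0") (auto simp: hh_def min_def algebra_simps)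

lemma hh_peak_val: "hh b (1/2-b) = Delta_a b"
proof -
  have "2*b*(1/2-b) = Delta_a b" "(2*b-1)*((1/2-b)-1/2) = Delta_a b"
    by (auto simp: Delta_a_def algebra_simps power2_eq_square)
  then show ?thesis by (simp add: hh_def)
qed

lemma hh_ends: "b \<le> 1/2 \<Longrightarrow> hh b (b-1/2) = - Delta_a b" "0 < b \<Longrightarrow> hh b (b+1/2) = - Delta_a b"
  by (auto simp: hh_def min_def Delta_a_def algebra_simps power2_eq_square)

lemma Delta_pos: "0 < b \<Longrightarrow> b < 1/2 \<Longrightarrow> 0 < Delta_a b"
proof -
  assume "0 < b" "b < 1/2"
  then have "0 < b * (1 - 2*b)" by simp
  then show ?thesis by (simp add: Delta_a_def algebra_simps power2_eq_square)
qed

lemma hh_lip: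
  assumes "0 < b" "b < 1/2"
  shows "\<bar>hh b y - hh b z\<bar> \<le> \<bar>y - z\<bar>"
proof -
  have A: "\<bar>2*b*y - 2*b*z\<bar> \<le> \<bar>y - z\<bar>"
  proof -
    have "\<bar>2*b*y - 2*b*z\<bar> = (2*b) * \<bar>y-z\<bar>" using assms by (simp add: abs_mult right_diff_distrib[symmetric])
    also have "\<dots> \<le> \<bar>y-z\<bar>" using assms by (intro mult_left_le_one_le) auto
    finally show ?thesis .
  qed
  have B: "\<bar>(2*b-1)*(y-1/2) - (2*b-1)*(z-1/2)\<bar> \<le> \<bar>y - z\<bar>"
  proof -
    have "\<bar>(2*b-1)*(y-1/2) - (2*b-1)*(z-1/2)\<bar> = (1-2*b) * \<bar>y-z\<bar>" using assms
      by (simp add: abs_mult right_diff_distrib[symmetric] abs_minus_commute)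
    also have "\<dots> \<le> \<bar>y-z\<bar>" using assms by (intro mult_left_le_one_le) auto
    finally show ?thesis .
  qed
  show ?thesis using A B unfolding hh_def min_def by (auto split: if_splits simp: abs_if)
qed

lemma hh_left: "z \<le> 1/2 - b \<Longrightarrow> hh b z = 2*b*z"
proof -
  assume "z \<le> 1/2 - b"
  moreover have "(2*b-1)*(z-1/2) - 2*b*z = 1/2 - b - z" by (simp add: algebra_simps)
  ultimately show ?thesis by (simp add: hh_def)
qed

lemma hh_right: "z \<ge> 1/2 - b \<Longrightarrow> hh b z = (2*b-1)*(z-1/2)"
proof -
  assume "z \<ge> 1/2 - b"
  moreover have "(2*b-1)*(z-1/2) - 2*b*z = 1/2 - b - z" by (simp add: algebra_simps)
  ultimately show ?thesis by (simp add: hh_def)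
qed

lemma hh_le1: "hh b z \<le> 2*b*z" and hh_le2: "hh b z \<le> (2*b-1)*(z-1/2)"
  by (auto simp: hh_def)

lemma piece:
  assumes b: "0 < b" "b < 1/2" and e: "e = 0 \<or> e = 1" and u: "0 \<le> u" "u \<le> 2 * Delta_a b"
  shows "b-1/2 \<le> b-1/2+e+u/(2*b-e) \<and> b-1/2+e+u/(2*b-e) \<le> b+1/2 \<and>
         hh b (b-1/2+e+u/(2*b-e)) = - Delta_a b + u \<and>
         (u < 2 * Delta_a b \<longrightarrow> b-1/2+e+u/(2*b-e) \<noteq> 1/2-b)"
  using e
proof
  assume e0: "e = 0"
  define q where "q = u/(2*b)"
  have uv: "u = 2*b * q" using b by (simp add: q_def)
  have D: "2 * Delta_a b = 2*b*(1-2*b)" by (simp add: Delta_a_def power2_eq_square algebra_simps)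
  have q0: "0 \<le> q" using b u by (simp add: q_def)
  have q1: "q \<le> 1 - 2*b" using u(2) b unfolding uv D by simp
  have q2: "u < 2 * Delta_a b \<Longrightarrow> q < 1 - 2*b" using b unfolding uv D by simp
  have c: "b-1/2+e+u/(2*b-e) = b-1/2+q" using e0 by (simp add: q_def)
  have h: "hh b (b-1/2+q) = 2*b*(b-1/2+q)" using q1 by (intro hh_left) simp
  have "2*b*(b-1/2+q) = - Delta_a b + u" by (simp add: uv Delta_a_def power2_eq_square algebra_simps)
  then show ?thesis unfolding c using h q0 q1 q2 b by auto
next
  assume e1: "e = 1"
  define q where "q = u/(1-2*b)"
  have uv: "u = (1-2*b) * q" using b by (simp add: q_def)
  have D: "2 * Delta_a b = (1-2*b)*(2*b)" by (simp add: Delta_a_def power2_eq_square algebra_simps)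
  have q0: "0 \<le> q" using b u by (simp add: q_def)
  have q1: "q \<le> 2*b" using u(2) b unfolding uv D by simp
  have q2: "u < 2 * Delta_a b \<Longrightarrow> q < 2*b" using b unfolding uv D by simp
  have c: "b-1/2+e+u/(2*b-e) = b+1/2- q"
  proof -
    have "u/(2*b-1) = - q" using b by (simp add: q_def divide_simps) (simp add: algebra_simps)
    then show ?thesis using e1 by simp
  qed
  have h: "hh b (b+1/2- q) = (2*b-1)*((b+1/2- q)-1/2)" using q1 by (intro hh_right) simp
  have "(2*b-1)*((b+1/2- q)-1/2) = - Delta_a b + u" by (simp add: uv Delta_a_def power2_eq_square algebra_simps)
  then show ?thesis unfolding c using h q0 q1 q2 b by auto
qed

lemma piece_inv:
  assumes b: "0 < b" "b < 1/2" and y: "b-1/2 < y" "y < b+1/2" "y \<noteq> 1/2-b"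
  defines "e \<equiv> (if y > 1/2-b then 1 else 0::real)"
  shows "y = b-1/2+e+(hh b y + Delta_a b)/(2*b-e) \<and> - Delta_a b < hh b y \<and> hh b y < Delta_a b"
proof (cases "y > 1/2-b")
  case True
  have h: "hh b y = (2*b-1)*(y-1/2)" using True by (intro hh_right) simp
  have "(hh b y + Delta_a b)/(2*b-1) = y - 1/2 - b"
    using b by (simp add: h Delta_a_def power2_eq_square divide_simps) (simp add: algebra_simps)
  moreover have "- Delta_a b < hh b y" 
  proof -
    have "(2*b-1)*(y-1/2) - (2*b-1)*((b+1/2)-1/2) = (1-2*b)*((b+1/2) - y)" by (simp add: algebra_simps)
    moreover have "0 < (1-2*b)*((b+1/2) - y)" using b y by simp
    moreover have "(2*b-1)*((b+1/2)-1/2) = - Delta_a b" by (simp add: Delta_a_def power2_eq_square algebra_simps)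
    ultimately show ?thesis using h by linarith
  qed
  moreover have "hh b y < Delta_a b"
  proof -
    have "(2*b-1)*(y-1/2) - (2*b-1)*((1/2-b)-1/2) = (1-2*b)*((1/2-b) - y)" by (simp add: algebra_simps)
    moreover have "(1-2*b)*((1/2-b) - y) < 0" using b True by (simp add: mult_pos_neg)
    moreover have "(2*b-1)*((1/2-b)-1/2) = Delta_a b" by (simp add: Delta_a_def power2_eq_square algebra_simps)
    ultimately show ?thesis using h by linarith
  qed
  ultimately show ?thesis using True by (simp add: e_def)
next
  case False
  then have F: "y < 1/2-b" using y by simp
  have h: "hh b y = 2*b*y" using F by (intro hh_left) simp
  have "(hh b y + Delta_a b)/(2*b) = y + 1/2 - b"
    using b by (simp add: h Delta_a_def power2_eq_square divide_simps) (simp add: algebra_simps)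
  moreover have "- Delta_a b < hh b y" 
  proof -
    have "2*b*y - 2*b*(b-1/2) = 2*b*(y - (b-1/2))" by (simp add: algebra_simps)
    moreover have "0 < 2*b*(y - (b-1/2))" using b y by simp
    moreover have "2*b*(b-1/2) = - Delta_a b" by (simp add: Delta_a_def power2_eq_square algebra_simps)
    ultimately show ?thesis using h by linarith
  qed
  moreover have "hh b y < Delta_a b"
  proof -
    have "2*b*y - 2*b*(1/2-b) = 2*b*(y - (1/2-b))" by (simp add: algebra_simps)
    moreover have "2*b*(y - (1/2-b)) < 0" using b F by (simp add: mult_pos_neg)
    moreover have "2*b*(1/2-b) = Delta_a b" by (simp add: Delta_a_def power2_eq_square algebra_simps)
    ultimately show ?thesis using h by linarith
  qed
  ultimately show ?thesis using False by (simp add: e_def)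
qed

lemma hh_loclin:
  assumes b: "0 < b" "b < 1/2" and y: "b-1/2 < y" "y < b+1/2" "y \<noteq> 1/2-b"
  shows "\<exists>eta > 0. \<exists>sig. sig \<noteq> 0 \<and> \<bar>sig\<bar> < 1 \<and> (\<forall>s. \<bar>s\<bar> \<le> eta \<longrightarrow>
           b-1/2 \<le> y+s \<and> y+s \<le> b+1/2 \<and> hh b (y+s) = hh b y + sig * s)"
proof (cases "y < 1/2-b")
  case True
  define eta where "eta = min (y-(b-1/2)) (1/2-b-y)"
  have P: "\<forall>s. \<bar>s\<bar> \<le> eta \<longrightarrow> b-1/2 \<le> y+s \<and> y+s \<le> b+1/2 \<and> hh b (y+s) = hh b y + (2*b) * s"
  proof (intro allI impI)
    fix s assume s: "\<bar>s\<bar> \<le> eta"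
    have "hh b (y+s) = 2*b*(y+s)" using s by (intro hh_left) (auto simp: eta_def)
    moreover have "hh b y = 2*b*y" using True by (intro hh_left) auto
    ultimately show "b-1/2 \<le> y+s \<and> y+s \<le> b+1/2 \<and> hh b (y+s) = hh b y + (2*b) * s"
      using s b by (auto simp: eta_def algebra_simps)
  qed
  have "eta > 0" using True y by (simp add: eta_def)
  moreover have "2*b \<noteq> 0" "\<bar>2*b\<bar> < 1" using b by auto
  ultimately show ?thesis using P by blast
next
  case False
  then have F: "y > 1/2-b" using y by simp
  define eta where "eta = min (b+1/2-y) (y-(1/2-b))"
  have P: "\<forall>s. \<bar>s\<bar> \<le> eta \<longrightarrow> b-1/2 \<le> y+s \<and> y+s \<le> b+1/2 \<and> hh b (y+s) = hh b y + (2*b-1) * s"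
  proof (intro allI impI)
    fix s assume s: "\<bar>s\<bar> \<le> eta"
    have "hh b (y+s) = (2*b-1)*((y+s)-1/2)" using s by (intro hh_right) (auto simp: eta_def)
    moreover have "hh b y = (2*b-1)*(y-1/2)" using F by (intro hh_right) auto
    ultimately show "b-1/2 \<le> y+s \<and> y+s \<le> b+1/2 \<and> hh b (y+s) = hh b y + (2*b-1) * s"
      using s b by (auto simp: eta_def algebra_simps)
  qed
  have "eta > 0" using F y by (simp add: eta_def)
  moreover have "2*b-1 \<noteq> 0" "\<bar>2*b-1\<bar> < 1" using b by auto
  ultimately show ?thesis using P by blast
qed

lemma hh_strict:
  assumes b: "0 < b" "b < 1/2" and y: "y \<noteq> 1/2-b"
    and e: "hh b (y+d) = hh b y" "hh b (y-d) = hh b y"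
  shows "d = 0"
proof (rule ccontr)
  assume d: "d \<noteq> 0"
  define z where "z = y - \<bar>d\<bar>"
  define w where "w = y + \<bar>d\<bar>"
  have hz: "hh b z = hh b y" "hh b w = hh b y" using e by (cases "d \<ge> 0"; simp add: z_def w_def)+
  show False
  proof (cases "y < 1/2-b")
    case True
    have "hh b z \<le> 2*b*z" by (rule hh_le1)
    moreover have "hh b y = 2*b*y" using True by (intro hh_left) auto
    moreover have "2*b*z < 2*b*y" using b d by (simp add: z_def)
    ultimately show False using hz by linarith
  next
    case False
    then have F: "y \<ge> 1/2-b" by simp
    have "hh b w \<le> (2*b-1)*(w-1/2)" by (rule hh_le2)
    moreover have "hh b y = (2*b-1)*(y-1/2)" using F by (intro hh_right) auto
    moreover have "(2*b-1)*(w-1/2) < (2*b-1)*(y-1/2)" using b d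
      by (intro mult_strict_left_mono_neg) (auto simp: w_def)
    ultimately show False using hz by linarith
  qed
qed



definition FF :: "real^'m::finite \<Rightarrow> real^'m \<Rightarrow> real" where
  "FF a x = 1/2 + (\<Sum>i\<in>UNIV. hh (a$i) (x$i))"

definition boxp :: "real^'m::finite \<Rightarrow> real^'m \<Rightarrow> bool" where
  "boxp a x \<longleftrightarrow> (\<forall>i. a$i - 1/2 \<le> x$i \<and> x$i \<le> a$i + 1/2)"

lemma RP_iff: "(x,t) \<in> RP a \<longleftrightarrow> boxp a x \<and> \<bar>t\<bar> \<le> 1 \<and> \<bar>t\<bar> \<le> FF a x"
proof -
  have ge: "(\<Sum>i\<in>UNIV. hh (a$i) (x$i)) \<le> (\<Sum>i\<in>UNIV. (2 * a$i - \<delta> i) * (x$i - \<delta> i / 2))"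
    if "\<forall>i. \<delta> i \<in> {0,1}" for \<delta> :: "'a \<Rightarrow> real"
  proof (rule sum_mono)
    fix i
    show "hh (a$i) (x$i) \<le> (2 * a$i - \<delta> i) * (x$i - \<delta> i / 2)"
      using that[rule_format, of i] hh_le1[of "a$i" "x$i"] hh_le2[of "a$i" "x$i"] by auto
  qed
  define \<delta>0 where "\<delta>0 i = (if x$i \<ge> 1/2 - a$i then 1 else 0::real)" for i
  have d0: "\<forall>i. \<delta>0 i \<in> {0,1}" by (simp add: \<delta>0_def)
  have eq: "(\<Sum>i\<in>UNIV. (2 * a$i - \<delta>0 i) * (x$i - \<delta>0 i / 2)) = (\<Sum>i\<in>UNIV. hh (a$i) (x$i))"
  proof (rule sum.cong)
    fix i
    show "(2 * a$i - \<delta>0 i) * (x$i - \<delta>0 i / 2) = hh (a$i) (x$i)"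
    proof (cases "x$i \<ge> 1/2 - a$i")
      case True then show ?thesis by (simp add: \<delta>0_def hh_right)
    next
      case False then show ?thesis by (simp add: \<delta>0_def hh_left)
    qed
  qed simp
  show ?thesis
  proof
    assume "(x,t) \<in> RP a"
    then have 1: "boxp a x" "\<bar>t\<bar> \<le> 1" and 2: "\<forall>\<delta>::'a \<Rightarrow> real. (\<forall>i. \<delta> i \<in> {0,1}) \<longrightarrow>
        t \<le> 1/2 + (\<Sum>i\<in>UNIV. (2 * a$i - \<delta> i) * (x$i - \<delta> i / 2)) \<and>
        t \<ge> -1/2 - (\<Sum>i\<in>UNIV. (2 * a$i - \<delta> i) * (x$i - \<delta> i / 2))"
      by (auto simp: RP_def boxp_def)
    have H: "t \<le> 1/2 + (\<Sum>i\<in>UNIV. (2 * a$i - \<delta>0 i) * (x$i - \<delta>0 i / 2)) \<and>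
        t \<ge> -1/2 - (\<Sum>i\<in>UNIV. (2 * a$i - \<delta>0 i) * (x$i - \<delta>0 i / 2))" using 2 d0 by blast
    from H eq have "\<bar>t\<bar> \<le> FF a x" by (auto simp: FF_def)
    with 1 show "boxp a x \<and> \<bar>t\<bar> \<le> 1 \<and> \<bar>t\<bar> \<le> FF a x" by simp
  next
    assume A: "boxp a x \<and> \<bar>t\<bar> \<le> 1 \<and> \<bar>t\<bar> \<le> FF a x"
    show "(x,t) \<in> RP a"
      unfolding RP_def
    proof (intro CollectI exI conjI allI impI)
      fix \<delta> :: "'a \<Rightarrow> real" assume "\<forall>i. \<delta> i \<in> {0,1}"
      from ge[OF this] A
      show "t \<le> 1/2 + (\<Sum>i\<in>UNIV. (2 * a$i - \<delta> i) * (x$i - \<delta> i / 2))"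
        "t \<ge> -1/2 - (\<Sum>i\<in>UNIV. (2 * a$i - \<delta> i) * (x$i - \<delta> i / 2))"
        by (auto simp: FF_def)
    qed (use A in \<open>auto simp: boxp_def\<close>)
  qed
qed

lemma comb_ge: "(l::real) \<le> p \<Longrightarrow> l \<le> q \<Longrightarrow> 0 \<le> u \<Longrightarrow> 0 \<le> v \<Longrightarrow> u + v = 1 \<Longrightarrow> l \<le> u * p + v * q"
proof -
  assume *: "l \<le> p" "l \<le> q" "0 \<le> u" "0 \<le> v" "u + v = 1"
  have e: "u * p + v * q - l = u * (p-l) + v * (q-l) + (u+v-1) * l" by (simp add: algebra_simps)
  have "0 \<le> u * (p-l)" "0 \<le> v * (q-l)" using * by simp_all
  then show ?thesis using e *(5) by simp
qed

lemma FF_concave: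
  assumes "0 \<le> u" "0 \<le> v" "u + v = 1"
  shows "u * FF a x + v * FF a y \<le> FF a (u *\<^sub>R x + v *\<^sub>R y)"
proof -
  have v: "v = 1 - u" using assms by simp
  have "u * FF a x + v * FF a y = (u+v)/2 + (u * (\<Sum>i\<in>UNIV. hh (a$i) (x$i)) + v * (\<Sum>i\<in>UNIV. hh (a$i) (y$i)))"
    unfolding FF_def by (simp add: distrib_left add_divide_distrib)
  also have "\<dots> = 1/2 + (\<Sum>i\<in>UNIV. u * hh (a$i) (x$i) + v * hh (a$i) (y$i))"
    unfolding assms(3) by (simp add: sum.distrib sum_distrib_left)
  also have "\<dots> \<le> 1/2 + (\<Sum>i\<in>UNIV. hh (a$i) (u * x$i + v * y$i))"
  proof -
    have "u * hh (a$i) (x$i) + v * hh (a$i) (y$i) \<le> hh (a$i) (u * x$i + v * y$i)" for i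
      using hh_concave[of u "a$i" "x$i" "y$i"] assms unfolding v by simp
    then show ?thesis by (simp add: sum_mono)
  qed
  also have "\<dots> = FF a (u *\<^sub>R x + v *\<^sub>R y)" by (simp add: FF_def)
  finally show ?thesis .
qed

lemma convex_RP: "convex (RP a)"
  unfolding convex_def
proof (intro ballI allI impI)
  fix p q and u v :: real
  assume p: "p \<in> RP a" and q: "q \<in> RP a" and uv: "0 \<le> u" "0 \<le> v" "u + v = 1"
  obtain x t where pt: "p = (x,t)" by (cases p)
  obtain y s where qs: "q = (y,s)" by (cases q)
  have P: "boxp a x" "\<bar>t\<bar> \<le> 1" "\<bar>t\<bar> \<le> FF a x" using p pt RP_iff by auto
  have Q: "boxp a y" "\<bar>s\<bar> \<le> 1" "\<bar>s\<bar> \<le> FF a y" using q qs RP_iff by auto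
  have ab: "\<bar>u * t + v * s\<bar> \<le> u * \<bar>t\<bar> + v * \<bar>s\<bar>" using uv
  proof -
    have "\<bar>u * t + v * s\<bar> \<le> \<bar>u * t\<bar> + \<bar>v * s\<bar>" by (rule abs_triangle_ineq)
    also have "\<dots> = u * \<bar>t\<bar> + v * \<bar>s\<bar>" using uv by (simp add: abs_mult)
    finally show ?thesis .
  qed
  have "boxp a (u *\<^sub>R x + v *\<^sub>R y)"
    unfolding boxp_def
  proof
    fix i
    have bx: "a$i - 1/2 \<le> x$i" "x$i \<le> a$i + 1/2" "a$i - 1/2 \<le> y$i" "y$i \<le> a$i + 1/2"
      using P(1) Q(1) by (auto simp: boxp_def)
    have "a$i - 1/2 \<le> u * x$i + v * y$i" using bx uv by (intro comb_ge) auto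
    moreover have "- (a$i + 1/2) \<le> u * (- x$i) + v * (- y$i)" using bx uv by (intro comb_ge) auto
    ultimately show "a$i - 1/2 \<le> (u *\<^sub>R x + v *\<^sub>R y)$i \<and> (u *\<^sub>R x + v *\<^sub>R y)$i \<le> a$i + 1/2" by simp
  qed
  moreover have "\<bar>u * t + v * s\<bar> \<le> 1"
  proof -
    have "u * \<bar>t\<bar> + v * \<bar>s\<bar> \<le> u * 1 + v * 1" using uv P Q by (intro add_mono mult_left_mono) auto
    then show ?thesis using ab uv by simp
  qed
  moreover have "\<bar>u * t + v * s\<bar> \<le> FF a (u *\<^sub>R x + v *\<^sub>R y)"
  proof -
    have "u * \<bar>t\<bar> + v * \<bar>s\<bar> \<le> u * FF a x + v * FF a y" using uv P Q by (intro add_mono mult_left_mono) auto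
    then show ?thesis using ab FF_concave[of u v a x y] uv by linarith
  qed
  ultimately show "u *\<^sub>R p + v *\<^sub>R q \<in> RP a" unfolding pt qs by (simp add: RP_iff)
qed

lemma ext_iff:
  assumes "convex S"
  shows "v extreme_point_of S \<longleftrightarrow> v \<in> S \<and> (\<forall>w. v + w \<in> S \<longrightarrow> v - w \<in> S \<longrightarrow> w = 0)"
proof
  assume E: "v extreme_point_of S"
  show "v \<in> S \<and> (\<forall>w. v + w \<in> S \<longrightarrow> v - w \<in> S \<longrightarrow> w = 0)"
  proof (intro conjI allI impI)
    show "v \<in> S" using E by (simp add: extreme_point_of_def)
    fix w assume w: "v + w \<in> S" "v - w \<in> S"
    show "w = 0"
    proof (rule ccontr)
      assume w0: "w \<noteq> 0"
      have s2: "(v + w) - (v - w) = 2 *\<^sub>R w" by (simp add: scaleR_2)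
      have "v - w \<noteq> v + w"
      proof
        assume "v - w = v + w"
        with s2 have "2 *\<^sub>R w = 0" by simp
        with w0 show False by simp
      qed
      then have "midpoint (v - w) (v + w) \<in> open_segment (v - w) (v + w)" by simp
      moreover have "midpoint (v - w) (v + w) = v" by (simp add: midpoint_def scaleR_2[symmetric] algebra_simps)
      ultimately show False using E w by (auto simp: extreme_point_of_def)
    qed
  qed
next
  assume A: "v \<in> S \<and> (\<forall>w. v + w \<in> S \<longrightarrow> v - w \<in> S \<longrightarrow> w = 0)"
  show "v extreme_point_of S"
    unfolding extreme_point_of_def
  proof (intro conjI ballI)
    show "v \<in> S" using A by simp
    fix p q assume pq: "p \<in> S" "q \<in> S"
    show "v \<notin> open_segment p q"
    proof
      assume "v \<in> open_segment p q"
      then obtain u where u: "p \<noteq> q" "0 < u" "u < 1" "v = (1 - u) *\<^sub>R p + u *\<^sub>R q"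
        by (auto simp: in_segment)
      define c where "c = min u (1-u)"
      have c: "0 < c" "c \<le> u" "c \<le> 1 - u" using u by (auto simp: c_def)
      have e1: "v + c *\<^sub>R (q - p) = (1 - (u+c)) *\<^sub>R p + (u+c) *\<^sub>R q"
        using u(4) by (simp add: algebra_simps)
      have m1: "(1 - (u+c)) *\<^sub>R p + (u+c) *\<^sub>R q \<in> S"
        using c pq by (intro convexD[OF assms]) auto
      have e2: "v - c *\<^sub>R (q - p) = (1 - (u-c)) *\<^sub>R p + (u-c) *\<^sub>R q"
        using u(4) by (simp add: algebra_simps)
      have m2: "(1 - (u-c)) *\<^sub>R p + (u-c) *\<^sub>R q \<in> S"
        using c pq by (intro convexD[OF assms]) auto
      have "v + c *\<^sub>R (q - p) \<in> S" "v - c *\<^sub>R (q - p) \<in> S" using e1 m1 e2 m2 by metis+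
      then have "c *\<^sub>R (q - p) = 0" using A by blast
      then show False using c u by simp
    qed
  qed
qed



lemma FF_upd: "FF a (\<chi> i. if i = k then c else f i) = FF a (\<chi> i. f i) - hh (a$k) (f k) + hh (a$k) c"
proof -
  have "(\<Sum>i\<in>UNIV. hh (a$i) ((\<chi> i. if i = k then c else f i)$i)) =
        hh (a$k) c + (\<Sum>i\<in>UNIV-{k}. hh (a$i) (f i))"
    by (subst sum.remove[of UNIV k]) (auto intro!: sum.cong)
  moreover have "(\<Sum>i\<in>UNIV. hh (a$i) ((\<chi> i. f i)$i)) = hh (a$k) (f k) + (\<Sum>i\<in>UNIV-{k}. hh (a$i) (f i))"
    by (subst sum.remove[of UNIV k]) auto
  ultimately show ?thesis by (simp add: FF_def)
qed

lemma FF_single: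
  assumes "\<forall>i. i \<noteq> k \<longrightarrow> d$i = 0"
  shows "FF a (x + d) = FF a x - hh (a$k) (x$k) + hh (a$k) (x$k + d$k)"
proof -
  have "x + d = (\<chi> i. if i = k then x$k + d$k else x$i)" using assms by (auto simp: vec_eq_iff)
  then show ?thesis using FF_upd[of a k "x$k + d$k" "\<lambda>i. x$i"] by simp
qed

lemma FF_single':
  assumes "\<forall>i. i \<noteq> k \<longrightarrow> d$i = 0"
  shows "FF a (x - d) = FF a x - hh (a$k) (x$k) + hh (a$k) (x$k - d$k)"
  using FF_single[of k "-d" a x] assms by simp

lemma FF_double:
  assumes "i \<noteq> j" "\<forall>m. m \<noteq> i \<and> m \<noteq> j \<longrightarrow> d$m = 0"
  shows "FF a (x + d) = FF a x - hh (a$i) (x$i) + hh (a$i) (x$i + d$i)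
                              - hh (a$j) (x$j) + hh (a$j) (x$j + d$j)"
proof -
  define d1 where "d1 = (\<chi> m. if m = i then d$i else 0)"
  define d2 where "d2 = (\<chi> m. if m = j then d$j else 0)"
  have "d = d1 + d2" using assms by (auto simp: vec_eq_iff d1_def d2_def)
  then have e: "x + d = (x + d1) + d2" by (simp add: add.assoc)
  have "FF a ((x + d1) + d2) = FF a (x + d1) - hh (a$j) ((x+d1)$j) + hh (a$j) ((x+d1)$j + d2$j)"
    by (rule FF_single) (simp add: d2_def)
  moreover have "FF a (x + d1) = FF a x - hh (a$i) (x$i) + hh (a$i) (x$i + d1$i)"
    by (rule FF_single) (simp add: d1_def)
  moreover have "(x+d1)$j = x$j" "d2$j = d$j" "d1$i = d$i" using assms(1) by (auto simp: d1_def d2_def)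
  ultimately show ?thesis unfolding e by simp
qed

lemma FF_sym: "FF a (x + d) + FF a (x - d) = 2 * FF a x -
   (\<Sum>i\<in>UNIV. 2 * hh (a$i) (x$i) - hh (a$i) (x$i + d$i) - hh (a$i) (x$i - d$i))"
  by (simp add: FF_def sum_subtractf sum_distrib_left sum.distrib algebra_simps)

lemma KS_insert:
  assumes "k \<notin> S"
  shows "KS a S = KS a (insert k S) + 2 * Delta_a (a$k)"
proof -
  have 1: "DeltaS a (insert k S) = Delta_a (a$k) + DeltaS a S"
    using assms by (simp add: DeltaS_def)
  have "UNIV - S = insert k (UNIV - insert k S)" using assms by auto
  then have 2: "DeltaS a (UNIV - S) = Delta_a (a$k) + DeltaS a (UNIV - insert k S)"
    by (simp add: DeltaS_def)
  show ?thesis using 1 2 by (simp add: KS_def)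
qed

lemma KS_remove:
  assumes "k \<in> S"
  shows "KS a (S - {k}) = KS a S + 2 * Delta_a (a$k)"
  using KS_insert[of k "S - {k}" a] assms by (simp add: insert_absorb)

lemma FF_base:
  assumes a: "\<forall>i. 0 < a$i \<and> a$i < 1/2" and l: "labeled S \<epsilon>"
  shows "FF a (\<chi> i. base_coord a S \<epsilon> i) = KS a S"
proof -
  have "(\<Sum>i\<in>UNIV. hh (a$i) (base_coord a S \<epsilon> i)) =
        (\<Sum>i\<in>UNIV \<inter> S. hh (a$i) (base_coord a S \<epsilon> i)) + (\<Sum>i\<in>UNIV - S. hh (a$i) (base_coord a S \<epsilon> i))"
    by (rule sum.Int_Diff) simp
  also have "(\<Sum>i\<in>UNIV \<inter> S. hh (a$i) (base_coord a S \<epsilon> i)) = - DeltaS a S"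
    unfolding DeltaS_def sum_negf[symmetric]
  proof (rule sum.cong)
    fix i assume "i \<in> S"
    then have "i \<in> S" "\<epsilon> i = 0 \<or> \<epsilon> i = 1" using l by (auto simp: labeled_def)
    then show "hh (a$i) (base_coord a S \<epsilon> i) = - Delta_a (a$i)"
    proof -
      have ai: "0 < a$i" "a$i \<le> 1/2" using a by (auto simp: less_imp_le)
      have "hh (a$i) (a$i - 1/2) = - Delta_a (a$i)" "hh (a$i) (a$i + 1/2) = - Delta_a (a$i)"
        using hh_ends[of "a$i"] ai by auto
      then show ?thesis using \<open>i \<in> S\<close> \<open>\<epsilon> i = 0 \<or> \<epsilon> i = 1\<close>
        by (auto simp: base_coord_def add.commute)
    qed
  qed simp
  also have "(\<Sum>i\<in>UNIV - S. hh (a$i) (base_coord a S \<epsilon> i)) = DeltaS a (UNIV - S)"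
    unfolding DeltaS_def by (rule sum.cong) (auto simp: base_coord_def hh_peak_val)
  finally show ?thesis by (simp add: FF_def KS_def)
qed

lemma sym_zero:
  assumes v: "(x,t) \<in> RP a" and tt: "\<bar>t\<bar> = FF a x"
    and p: "(x + d, t + u) \<in> RP a" and m: "(x - d, t - u) \<in> RP a"
  shows "\<forall>i. hh (a$i) (x$i + d$i) + hh (a$i) (x$i - d$i) = 2 * hh (a$i) (x$i)"
    and "FF a (x + d) + FF a (x - d) = 2 * FF a x"
    and "\<bar>t + u\<bar> \<le> FF a (x + d)" "\<bar>t - u\<bar> \<le> FF a (x - d)"
proof -
  have P: "\<bar>t + u\<bar> \<le> FF a (x + d)" "\<bar>t - u\<bar> \<le> FF a (x - d)" using p m by (auto simp: RP_iff)
  then show "\<bar>t + u\<bar> \<le> FF a (x + d)" "\<bar>t - u\<bar> \<le> FF a (x - d)" by auto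
  have nn: "\<forall>i\<in>UNIV. 0 \<le> 2 * hh (a$i) (x$i) - hh (a$i) (x$i + d$i) - hh (a$i) (x$i - d$i)"
  proof
    fix i
    show "0 \<le> 2 * hh (a$i) (x$i) - hh (a$i) (x$i + d$i) - hh (a$i) (x$i - d$i)"
      using hh_mid[of "a$i" "x$i" "d$i"] by linarith
  qed
  have "2 * \<bar>t\<bar> \<le> \<bar>t + u\<bar> + \<bar>t - u\<bar>" by linarith
  then have le: "(\<Sum>i\<in>UNIV. 2 * hh (a$i) (x$i) - hh (a$i) (x$i + d$i) - hh (a$i) (x$i - d$i)) \<le> 0"
    using FF_sym[of a x d] P tt by linarith
  have s0: "(\<Sum>i\<in>UNIV. 2 * hh (a$i) (x$i) - hh (a$i) (x$i + d$i) - hh (a$i) (x$i - d$i)) = 0"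
  proof -
    have "0 \<le> (\<Sum>i\<in>UNIV. 2 * hh (a$i) (x$i) - hh (a$i) (x$i + d$i) - hh (a$i) (x$i - d$i))"
      using nn by (intro sum_nonneg) auto
    then show ?thesis using le by linarith
  qed
  then have "\<forall>i\<in>UNIV. 2 * hh (a$i) (x$i) - hh (a$i) (x$i + d$i) - hh (a$i) (x$i - d$i) = 0"
    using nn by (simp add: sum_nonneg_eq_0_iff)
  then show "\<forall>i. hh (a$i) (x$i + d$i) + hh (a$i) (x$i - d$i) = 2 * hh (a$i) (x$i)"
  proof (intro allI)
    fix i
    assume A: "\<forall>i\<in>UNIV. 2 * hh (a$i) (x$i) - hh (a$i) (x$i + d$i) - hh (a$i) (x$i - d$i) = 0"
    have "2 * hh (a$i) (x$i) - hh (a$i) (x$i + d$i) - hh (a$i) (x$i - d$i) = 0" using A by blast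
    then show "hh (a$i) (x$i + d$i) + hh (a$i) (x$i - d$i) = 2 * hh (a$i) (x$i)" by linarith
  qed
  show "FF a (x + d) + FF a (x - d) = 2 * FF a x" using FF_sym[of a x d] s0 by simp
qed

lemma coord_zero:
  fixes b :: real
  assumes b: "0 < b" "b < 1/2" and y: "y = b-1/2 \<or> y = b+1/2 \<or> y = 1/2-b"
    and box: "b-1/2 \<le> y+d" "y+d \<le> b+1/2" "b-1/2 \<le> y-d" "y-d \<le> b+1/2"
    and h: "hh b (y+d) + hh b (y-d) = 2 * hh b y"
  shows "d = 0"
  using y
proof (elim disjE)
  assume "y = 1/2-b"
  then show "d = 0" using h hh_peak[of b d] by simp
qed (use box in auto)

lemma abs_u0: "\<bar>t + u\<bar> \<le> \<bar>t\<bar> \<Longrightarrow> \<bar>t - u\<bar> \<le> \<bar>(t::real)\<bar> \<Longrightarrow> u = 0"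
  by (cases "t \<ge> 0") (auto simp: abs_if split: if_splits)

lemma boxpD: "boxp a x \<Longrightarrow> a$i - 1/2 \<le> x$i \<and> x$i \<le> a$i + 1/2"
  by (simp add: boxp_def)

lemma coord_base:
  fixes b :: real
  assumes b: "0 < b" "b < 1/2" and y: "y = b-1/2 \<or> y = b+1/2 \<or> y = 1/2-b"
  shows "y = (if y \<noteq> 1/2-b then b-1/2+(if y > 1/2-b then 1 else 0) else 1/2-b)"
  using y b by auto



lemma ext_from:
  assumes "(x,t) \<in> RP a"
    and "\<forall>d u. (x + d, t + u) \<in> RP a \<longrightarrow> (x - d, t - u) \<in> RP a \<longrightarrow> d = 0 \<and> u = 0"
  shows "(x,t) extreme_point_of RP a"
proof -
  have "\<forall>w. (x,t) + w \<in> RP a \<longrightarrow> (x,t) - w \<in> RP a \<longrightarrow> w = 0"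
  proof (intro allI impI)
    fix w :: "(real^'a) \<times> real"
    assume "(x,t) + w \<in> RP a" "(x,t) - w \<in> RP a"
    then have "(x + fst w, t + snd w) \<in> RP a" "(x - fst w, t - snd w) \<in> RP a"
      by (cases w; simp)+
    then have "fst w = 0 \<and> snd w = 0" using assms(2) by blast
    then show "w = 0" by (simp add: prod_eq_iff)
  qed
  then show ?thesis using assms(1) by (simp add: ext_iff[OF convex_RP])
qed

lemma base_in:
  assumes "labeled S \<epsilon>"
  shows "base_coord a S \<epsilon> i = a$i-1/2 \<or> base_coord a S \<epsilon> i = a$i+1/2 \<or> base_coord a S \<epsilon> i = 1/2-a$i"
  using assms by (auto simp: base_coord_def labeled_def)

lemma box3:
  fixes b :: real
  assumes "0 < b" "b < 1/2" "y = b-1/2 \<or> y = b+1/2 \<or> y = 1/2-b"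
  shows "b-1/2 \<le> y \<and> y \<le> b+1/2"
  using assms by auto

lemma dzero:
  assumes a: "\<forall>i. 0 < a$i \<and> a$i < 1/2"
    and p: "(x + d, t1) \<in> RP a" and m: "(x - d, t2) \<in> RP a"
    and h: "\<forall>i. hh (a$i) (x$i + d$i) + hh (a$i) (x$i - d$i) = 2 * hh (a$i) (x$i)"
    and y: "x$i = a$i-1/2 \<or> x$i = a$i+1/2 \<or> x$i = 1/2-a$i"
  shows "d$i = 0"
proof -
  have "boxp a (x + d)" "boxp a (x - d)" using p m by (auto simp: RP_iff)
  then have "a$i - 1/2 \<le> x$i + d$i" "x$i + d$i \<le> a$i + 1/2" "a$i - 1/2 \<le> x$i - d$i" "x$i - d$i \<le> a$i + 1/2"
    by (auto dest: boxpD[of _ _ i])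
  moreover have "0 < a$i" "a$i < 1/2" using a by auto
  ultimately show ?thesis using coord_zero[of "a$i" "x$i" "d$i"] y h by blast
qed

lemma std_ext:
  assumes a: "\<forall>i. 0 < a$i \<and> a$i < 1/2" and l: "labeled S \<epsilon>"
    and K: "0 \<le> KS a S" "KS a S \<le> 1" and s: "s \<in> {1, -1::real}"
  shows "((\<chi> i. base_coord a S \<epsilon> i), s * KS a S) extreme_point_of RP a"
proof -
  define x where "x = (\<chi> i. base_coord a S \<epsilon> i)"
  define t where "t = s * KS a S"
  have FFx: "FF a x = KS a S" unfolding x_def by (rule FF_base[OF a l])
  have co: "x$i = a$i-1/2 \<or> x$i = a$i+1/2 \<or> x$i = 1/2-a$i" for i
    unfolding x_def using base_in[OF l] by simp
  have bx: "boxp a x" unfolding boxp_def using co a box3 by blast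
  have tt: "\<bar>t\<bar> = FF a x" using s K FFx by (auto simp: t_def)
  have inR: "(x,t) \<in> RP a" using bx tt K FFx by (simp add: RP_iff)
  have "(x,t) extreme_point_of RP a"
  proof (rule ext_from[OF inR], intro allI impI)
    fix d u assume p: "(x + d, t + u) \<in> RP a" and m: "(x - d, t - u) \<in> RP a"
    note sz = sym_zero[OF inR tt p m]
    have d0: "d = 0" using dzero[OF a p m sz(1) co] by (simp add: vec_eq_iff)
    then have "\<bar>t + u\<bar> \<le> \<bar>t\<bar>" "\<bar>t - u\<bar> \<le> \<bar>t\<bar>" using sz(3,4) tt by auto
    then show "d = 0 \<and> u = 0" using d0 abs_u0 by blast
  qed
  then show ?thesis by (simp add: x_def t_def)
qed

lemma mid_ext:
  assumes a: "\<forall>i. 0 < a$i \<and> a$i < 1/2" and l: "labeled S \<epsilon>" and k: "k \<in> S"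
    and K: "KS a S < 0" "0 < KS a (S - {k})"
  shows "((\<chi> i. if i = k then a$k - 1/2 + \<epsilon> k - KS a S / (2 * a$k - \<epsilon> k)
                               else base_coord a S \<epsilon> i), 0) extreme_point_of RP a"
proof -
  define c where "c = a$k - 1/2 + \<epsilon> k - KS a S / (2 * a$k - \<epsilon> k)"
  define x where "x = (\<chi> i. if i = k then c else base_coord a S \<epsilon> i)"
  have ak: "0 < a$k" "a$k < 1/2" using a by auto
  have ek: "\<epsilon> k = 0 \<or> \<epsilon> k = 1" using l k by (auto simp: labeled_def)
  have u2: "- KS a S < 2 * Delta_a (a$k)" using KS_remove[OF k, of a] K by linarith
  have c': "c = a$k - 1/2 + \<epsilon> k + (- KS a S) / (2 * a$k - \<epsilon> k)" by (simp add: c_def)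
  have pc: "a$k-1/2 \<le> c \<and> c \<le> a$k+1/2 \<and> hh (a$k) c = - Delta_a (a$k) + (- KS a S) \<and> c \<noteq> 1/2 - a$k"
    unfolding c' using piece[OF ak ek, of "- KS a S"] K u2 by auto
  have hb: "hh (a$k) (base_coord a S \<epsilon> k) = - Delta_a (a$k)"
    using ek k ak hh_ends[of "a$k"] by (auto simp: base_coord_def add.commute)
  have FFx: "FF a x = 0"
    unfolding x_def using FF_upd[of a k c "base_coord a S \<epsilon>"] FF_base[OF a l] hb pc by simp
  have co: "i \<noteq> k \<Longrightarrow> x$i = a$i-1/2 \<or> x$i = a$i+1/2 \<or> x$i = 1/2-a$i" for i
    unfolding x_def using base_in[OF l] by simp
  have xk: "x$k = c" by (simp add: x_def)
  have bx: "boxp a x" unfolding boxp_def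
  proof
    fix i show "a$i - 1/2 \<le> x$i \<and> x$i \<le> a$i + 1/2"
      using co[of i] a box3[of "a$i" "x$i"] pc xk by (cases "i = k") auto
  qed
  have tt: "\<bar>0::real\<bar> = FF a x" using FFx by simp
  have inR: "(x,0) \<in> RP a" using bx FFx by (simp add: RP_iff)
  have "(x,0) extreme_point_of RP a"
  proof (rule ext_from[OF inR], intro allI impI)
    fix d u assume p: "(x + d, 0 + u) \<in> RP a" and m: "(x - d, 0 - u) \<in> RP a"
    note sz = sym_zero[OF inR tt p m]
    have dk: "\<forall>i. i \<noteq> k \<longrightarrow> d$i = 0" using dzero[OF a p m sz(1)] co by blast
    have F1: "FF a (x + d) = FF a x - hh (a$k) c + hh (a$k) (c + d$k)" using FF_single[OF dk] xk by simp
    have F2: "FF a (x - d) = FF a x - hh (a$k) c + hh (a$k) (c - d$k)" using FF_single'[OF dk] xk by simp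
    have "FF a (x + d) = 0" "FF a (x - d) = 0" "u = 0" using sz(2,3,4) FFx by auto
    then have "hh (a$k) (c + d$k) = hh (a$k) c" "hh (a$k) (c - d$k) = hh (a$k) c" using F1 F2 FFx by auto
    then have "d$k = 0" using hh_strict[OF ak] pc by blast
    then have "d = 0" using dk by (auto simp: vec_eq_iff)
    then show "d = 0 \<and> u = 0" using \<open>u = 0\<close> by simp
  qed
  then show ?thesis unfolding x_def c_def by assumption
qed

lemma trunc_ext:
  assumes a: "\<forall>i. 0 < a$i \<and> a$i < 1/2" and l: "labeled S \<epsilon>" and k: "k \<notin> S"
    and ek: "\<epsilon> k \<in> {0,1}" and K: "KS a (insert k S) < 1" "1 < KS a S" and s: "s \<in> {1, -1::real}"
  shows "((\<chi> i. if i = k then a$k - 1/2 + \<epsilon> k + (1 - KS a (insert k S)) / (2 * a$k - \<epsilon> k)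
                               else base_coord a S \<epsilon> i), s) extreme_point_of RP a"
proof -
  define c where "c = a$k - 1/2 + \<epsilon> k + (1 - KS a (insert k S)) / (2 * a$k - \<epsilon> k)"
  define x where "x = (\<chi> i. if i = k then c else base_coord a S \<epsilon> i)"
  have ak: "0 < a$k" "a$k < 1/2" using a by auto
  have ek': "\<epsilon> k = 0 \<or> \<epsilon> k = 1" using ek by auto
  have KI: "KS a S = KS a (insert k S) + 2 * Delta_a (a$k)" by (rule KS_insert[OF k])
  have u2: "1 - KS a (insert k S) < 2 * Delta_a (a$k)" using KI K by linarith
  have pc: "a$k-1/2 \<le> c \<and> c \<le> a$k+1/2 \<and> hh (a$k) c = - Delta_a (a$k) + (1 - KS a (insert k S)) \<and> c \<noteq> 1/2 - a$k"
    unfolding c_def using piece[OF ak ek', of "1 - KS a (insert k S)"] K u2 by auto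
  have hb: "hh (a$k) (base_coord a S \<epsilon> k) = Delta_a (a$k)"
    using k by (simp add: base_coord_def hh_peak_val)
  have FFx: "FF a x = 1"
    unfolding x_def using FF_upd[of a k c "base_coord a S \<epsilon>"] FF_base[OF a l] hb pc KI by simp
  have co: "i \<noteq> k \<Longrightarrow> x$i = a$i-1/2 \<or> x$i = a$i+1/2 \<or> x$i = 1/2-a$i" for i
    unfolding x_def using base_in[OF l] by simp
  have xk: "x$k = c" by (simp add: x_def)
  have bx: "boxp a x" unfolding boxp_def
  proof
    fix i show "a$i - 1/2 \<le> x$i \<and> x$i \<le> a$i + 1/2"
      using co[of i] a box3[of "a$i" "x$i"] pc xk by (cases "i = k") auto
  qed
  have tt: "\<bar>s\<bar> = FF a x" using FFx s by auto
  have inR: "(x,s) \<in> RP a" using bx FFx s by (auto simp: RP_iff)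
  have "(x,s) extreme_point_of RP a"
  proof (rule ext_from[OF inR], intro allI impI)
    fix d u assume p: "(x + d, s + u) \<in> RP a" and m: "(x - d, s - u) \<in> RP a"
    note sz = sym_zero[OF inR tt p m]
    have "\<bar>s + u\<bar> \<le> 1" "\<bar>s - u\<bar> \<le> 1" using p m by (auto simp: RP_iff)
    then have u0: "u = 0" using abs_u0[of s u] s by auto
    have dk: "\<forall>i. i \<noteq> k \<longrightarrow> d$i = 0" using dzero[OF a p m sz(1)] co by blast
    have F1: "FF a (x + d) = FF a x - hh (a$k) c + hh (a$k) (c + d$k)" using FF_single[OF dk] xk by simp
    have F2: "FF a (x - d) = FF a x - hh (a$k) c + hh (a$k) (c - d$k)" using FF_single'[OF dk] xk by simp
    have "FF a (x + d) = 1" "FF a (x - d) = 1" using sz(2,3,4) FFx u0 s by auto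
    then have "hh (a$k) (c + d$k) = hh (a$k) c" "hh (a$k) (c - d$k) = hh (a$k) c" using F1 F2 FFx by auto
    then have "d$k = 0" using hh_strict[OF ak] pc by blast
    then have "d = 0" using dk by (auto simp: vec_eq_iff)
    then show "d = 0 \<and> u = 0" using u0 by simp
  qed
  then show ?thesis unfolding x_def c_def by assumption
qed



lemma noint_base:
  fixes b y :: real
  assumes "0 < b" "b < 1/2" "b-1/2 \<le> y" "y \<le> b+1/2" "\<not> (b-1/2 < y \<and> y < b+1/2 \<and> y \<noteq> 1/2-b)"
  shows "y = b-1/2 \<or> y = b+1/2 \<or> y = 1/2-b"
  using assms by auto

lemma ext_class:
  assumes a: "\<forall>i. 0 < a$i \<and> a$i < 1/2" and E: "(x,t) extreme_point_of RP a"
  shows "(x,t) \<in> standard_vertices a \<union> middle_vertices a \<union> truncating_vertices a"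
proof -
  have inR: "(x,t) \<in> RP a" and H: "\<forall>w. (x,t) + w \<in> RP a \<longrightarrow> (x,t) - w \<in> RP a \<longrightarrow> w = 0"
    using E by (auto simp: ext_iff[OF convex_RP])
  have H': "d = 0 \<and> u = 0" if "(x + d, t + u) \<in> RP a" "(x - d, t - u) \<in> RP a" for d u
    using H[rule_format, of "(d,u)"] that by (simp add: zero_prod_def)
  have bx: "boxp a x" and t1: "\<bar>t\<bar> \<le> 1" and tF: "\<bar>t\<bar> \<le> FF a x" using inR by (auto simp: RP_iff)
  have bxi: "a$i - 1/2 \<le> x$i" "x$i \<le> a$i + 1/2" for i using bx by (auto simp: boxp_def)
  have ai: "0 < a$i" "a$i < 1/2" for i using a by auto
  have S1: "\<bar>t\<bar> = 1 \<or> \<bar>t\<bar> = FF a x"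
  proof (rule ccontr)
    assume "\<not> (\<bar>t\<bar> = 1 \<or> \<bar>t\<bar> = FF a x)"
    then have lt: "\<bar>t\<bar> < 1" "\<bar>t\<bar> < FF a x" using t1 tF by auto
    define e where "e = min (1 - \<bar>t\<bar>) (FF a x - \<bar>t\<bar>)"
    have e: "0 < e" "\<bar>t\<bar> + e \<le> 1" "\<bar>t\<bar> + e \<le> FF a x" using lt by (auto simp: e_def)
    have "\<bar>t + e\<bar> \<le> \<bar>t\<bar> + e" "\<bar>t - e\<bar> \<le> \<bar>t\<bar> + e" using e by auto
    then have "(x + 0, t + e) \<in> RP a" "(x - 0, t - e) \<in> RP a" using e bx by (auto simp: RP_iff)
    then have "e = 0" using H' by blast
    then show False using e by simp
  qed
  have S2: "FF a x \<le> 1"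
  proof (rule ccontr)
    assume "\<not> FF a x \<le> 1"
    then have F1: "FF a x > 1" by simp
    then have tt: "\<bar>t\<bar> = 1" using S1 t1 by auto
    have ends: "x$i = a$i - 1/2 \<or> x$i = a$i + 1/2" for i
    proof (rule ccontr)
      assume "\<not> (x$i = a$i - 1/2 \<or> x$i = a$i + 1/2)"
      then have io: "a$i - 1/2 < x$i" "x$i < a$i + 1/2" using bxi[of i] by auto
      define et where "et = min (min (x$i - (a$i - 1/2)) (a$i + 1/2 - x$i)) (FF a x - 1)"
      have et: "0 < et" "et \<le> x$i - (a$i - 1/2)" "et \<le> a$i + 1/2 - x$i" "et \<le> FF a x - 1"
        using io F1 by (auto simp: et_def)
      define d where "d = (\<chi> j. if j = i then et else (0::real))"
      have dk: "\<forall>j. j \<noteq> i \<longrightarrow> d$j = 0" by (simp add: d_def)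
      have "FF a (x + d) = FF a x - hh (a$i) (x$i) + hh (a$i) (x$i + et)"
        using FF_single[OF dk] by (simp add: d_def)
      moreover have "\<bar>hh (a$i) (x$i + et) - hh (a$i) (x$i)\<bar> \<le> et"
        using hh_lip[OF ai[of i], of "x$i + et" "x$i"] et by simp
      ultimately have p1: "FF a (x + d) \<ge> 1" using et by linarith
      have "FF a (x - d) = FF a x - hh (a$i) (x$i) + hh (a$i) (x$i - et)"
        using FF_single'[OF dk] by (simp add: d_def)
      moreover have "\<bar>hh (a$i) (x$i - et) - hh (a$i) (x$i)\<bar> \<le> et"
        using hh_lip[OF ai[of i], of "x$i - et" "x$i"] et by simp
      ultimately have p2: "FF a (x - d) \<ge> 1" using et by linarith
      have "boxp a (x + d)" "boxp a (x - d)" unfolding boxp_def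
        using bxi et by (auto simp: d_def)
      then have "(x + d, t + 0) \<in> RP a" "(x - d, t - 0) \<in> RP a" using p1 p2 tt by (auto simp: RP_iff)
      then have "d = 0" using H' by blast
      then have "d$i = 0" by simp
      then show False using et by (simp add: d_def)
    qed
    have "hh (a$i) (x$i) < 0" for i
    proof -
      have "hh (a$i) (x$i) = - Delta_a (a$i)" using ends[of i] hh_ends[of "a$i"] ai[of i] by auto
      then show ?thesis using Delta_pos[OF ai[of i]] by simp
    qed
    then have "(\<Sum>i\<in>UNIV. hh (a$i) (x$i)) \<le> 0" by (intro sum_nonpos) (simp add: less_imp_le)
    then show False using F1 by (simp add: FF_def)
  qed
  have tt: "\<bar>t\<bar> = FF a x" using S1 S2 tF by auto
  define int where "int i \<longleftrightarrow> a$i - 1/2 < x$i \<and> x$i < a$i + 1/2 \<and> x$i \<noteq> 1/2 - a$i" for i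
  have S3: "i = j" if ij: "int i" "int j" for i j
  proof (rule ccontr)
    assume nij: "i \<noteq> j"
    obtain e1 sg1 where e1: "e1 > 0" "sg1 \<noteq> 0" "\<bar>sg1\<bar> < 1" and L1: "\<forall>s. \<bar>s\<bar> \<le> e1 \<longrightarrow>
           a$i-1/2 \<le> x$i+s \<and> x$i+s \<le> a$i+1/2 \<and> hh (a$i) (x$i+s) = hh (a$i) (x$i) + sg1 * s"
      using hh_loclin[OF ai[of i], of "x$i"] ij(1) unfolding int_def by blast
    obtain e2 sg2 where e2: "e2 > 0" "sg2 \<noteq> 0" "\<bar>sg2\<bar> < 1" and L2: "\<forall>s. \<bar>s\<bar> \<le> e2 \<longrightarrow>
           a$j-1/2 \<le> x$j+s \<and> x$j+s \<le> a$j+1/2 \<and> hh (a$j) (x$j+s) = hh (a$j) (x$j) + sg2 * s"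
      using hh_loclin[OF ai[of j], of "x$j"] ij(2) unfolding int_def by blast
    define al where "al = min e1 e2"
    have al: "al > 0" "al \<le> e1" "al \<le> e2" using e1 e2 by (auto simp: al_def)
    define d where "d = (\<chi> m. if m = i then al * sg2 else if m = j then - (al * sg1) else 0)"
    have dm: "\<forall>m. m \<noteq> i \<and> m \<noteq> j \<longrightarrow> d$m = 0" by (simp add: d_def)
    have dm': "\<forall>m. m \<noteq> i \<and> m \<noteq> j \<longrightarrow> (-d)$m = 0" by (simp add: d_def)
    have di: "d$i = al * sg2" "d$j = - (al * sg1)" using nij by (auto simp: d_def)
    have b1: "\<bar>al * sg2\<bar> \<le> e1" "\<bar>al * sg1\<bar> \<le> e2"
    proof -
      have "\<bar>al * sg2\<bar> = al * \<bar>sg2\<bar>" using al by (simp add: abs_mult)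
      also have "\<dots> \<le> al" using al e2 by (simp add: mult_left_le_one_le less_imp_le)
      finally show "\<bar>al * sg2\<bar> \<le> e1" using al by simp
      have "\<bar>al * sg1\<bar> = al * \<bar>sg1\<bar>" using al by (simp add: abs_mult)
      also have "\<dots> \<le> al" using al e1 by (simp add: mult_left_le_one_le less_imp_le)
      finally show "\<bar>al * sg1\<bar> \<le> e2" using al by simp
    qed
    have h1: "hh (a$i) (x$i + al * sg2) = hh (a$i) (x$i) + sg1 * (al * sg2)"
             "hh (a$i) (x$i + - (al * sg2)) = hh (a$i) (x$i) + sg1 * (- (al * sg2))"
      using L1[rule_format, of "al * sg2"] L1[rule_format, of "- (al * sg2)"] b1 by auto
    have h2: "hh (a$j) (x$j + - (al * sg1)) = hh (a$j) (x$j) + sg2 * (- (al * sg1))"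
             "hh (a$j) (x$j + (al * sg1)) = hh (a$j) (x$j) + sg2 * (al * sg1)"
      using L2[rule_format, of "al * sg1"] L2[rule_format, of "- (al * sg1)"] b1 by auto
    have F1: "FF a (x + d) = FF a x" using FF_double[OF nij dm, of a x] di h1 h2 by (simp add: algebra_simps)
    have F2: "FF a (x + - d) = FF a x" using FF_double[OF nij dm', of a x] di h1 h2 by (simp add: algebra_simps)
    have bd: "a$m - 1/2 \<le> x$m + d$m \<and> x$m + d$m \<le> a$m + 1/2 \<and> a$m - 1/2 \<le> x$m - d$m \<and> x$m - d$m \<le> a$m + 1/2" for m
    proof -
      consider "m = i" | "m = j" | "m \<noteq> i \<and> m \<noteq> j" by blast
      then show ?thesis
      proof cases
        case 1
        then show ?thesis using L1[rule_format, of "al * sg2"] L1[rule_format, of "- (al * sg2)"] b1 di by auto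
      next
        case 2
        then show ?thesis using L2[rule_format, of "al * sg1"] L2[rule_format, of "- (al * sg1)"] b1 di by auto
      next
        case 3
        then show ?thesis using dm bxi[of m] by auto
      qed
    qed
    have "boxp a (x + d)" "boxp a (x - d)" unfolding boxp_def using bd by auto
    moreover have "FF a (x - d) = FF a x" using F2 by simp
    ultimately have "(x + d, t + 0) \<in> RP a" "(x - d, t - 0) \<in> RP a" using tt t1 F1 by (auto simp: RP_iff)
    then have "d = 0" using H' by blast
    then have "al * sg2 = 0" using di by simp
    then show False using al e2 by simp
  qed
  have nonint: "\<not> int i \<Longrightarrow> x$i = a$i-1/2 \<or> x$i = a$i+1/2 \<or> x$i = 1/2-a$i" for i
    using noint_base[OF ai[of i] bxi[of i]] unfolding int_def by blast
  define S0 where "S0 = {i. x$i \<noteq> 1/2 - a$i}"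
  define \<epsilon> where "\<epsilon> i = (if x$i > 1/2 - a$i then 1 else (0::real))" for i
  have lab: "labeled S \<epsilon>" for S by (simp add: labeled_def \<epsilon>_def)
  have xbase: "\<not> int i \<Longrightarrow> x$i = base_coord a S0 \<epsilon> i" for i
    using coord_base[OF ai[of i] nonint[of i]] by (auto simp: base_coord_def S0_def \<epsilon>_def)
  show ?thesis
  proof (cases "\<exists>k. int k")
    case False
    then have xe: "x = (\<chi> i. base_coord a S0 \<epsilon> i)" using xbase by (auto simp: vec_eq_iff)
    have FFx: "FF a x = KS a S0" unfolding xe by (rule FF_base[OF a lab])
    define sg where "sg = (if t \<ge> 0 then 1 else -1::real)"
    have "t = sg * KS a S0" using tt FFx by (auto simp: sg_def)
    moreover have "0 \<le> KS a S0" "KS a S0 \<le> 1" using tt FFx S2 by auto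
    moreover have "sg \<in> {1,-1}" by (simp add: sg_def)
    ultimately have "(x,t) \<in> standard_vertices a"
      unfolding standard_vertices_def
      by (intro CollectI exI[of _ S0] exI[of _ \<epsilon>] exI[of _ sg]) (simp add: xe lab)
    then show ?thesis by simp
  next
    case True
    then obtain k where ik: "int k" by blast
    have oth: "i \<noteq> k \<Longrightarrow> x$i = base_coord a S0 \<epsilon> i" for i using S3 ik xbase by blast
    have kS: "k \<in> S0" using ik by (simp add: int_def S0_def)
    have ek: "\<epsilon> k = 0 \<or> \<epsilon> k = 1" by (simp add: \<epsilon>_def)
    have pinv: "x$k = a$k-1/2+\<epsilon> k+(hh (a$k) (x$k) + Delta_a (a$k))/(2*a$k-\<epsilon> k) \<and>
                - Delta_a (a$k) < hh (a$k) (x$k) \<and> hh (a$k) (x$k) < Delta_a (a$k)"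
      using piece_inv[OF ai[of k], of "x$k"] ik unfolding int_def \<epsilon>_def by simp
    have pk: "x$k = a$k-1/2+\<epsilon> k+(hh (a$k) (x$k) + Delta_a (a$k))/(2*a$k-\<epsilon> k)"
      and pb: "- Delta_a (a$k) < hh (a$k) (x$k)" "hh (a$k) (x$k) < Delta_a (a$k)"
      using pinv by blast+
    have xe: "x = (\<chi> i. if i = k then x$k else base_coord a S0 \<epsilon> i)" using oth by (auto simp: vec_eq_iff)
    have hbk: "hh (a$k) (base_coord a S0 \<epsilon> k) = - Delta_a (a$k)"
      using kS ek ai[of k] hh_ends[of "a$k"] by (auto simp: base_coord_def add.commute)
    have FFx: "FF a x = KS a S0 + Delta_a (a$k) + hh (a$k) (x$k)"
      using FF_upd[of a k "x$k" "base_coord a S0 \<epsilon>"] FF_base[OF a lab, of S0] hbk xe by simp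
    have Kr: "KS a (S0 - {k}) = KS a S0 + 2 * Delta_a (a$k)" by (rule KS_remove[OF kS])
    consider "FF a x = 0" | "FF a x = 1" | "0 < FF a x \<and> FF a x < 1" using S2 tt by fastforce
    then show ?thesis
    proof cases
      case 1
      then have t0: "t = 0" using tt by simp
      have K1: "KS a S0 < 0" "0 < KS a (S0 - {k})" using FFx 1 pb Kr by linarith+
      have "x$k = a$k - 1/2 + \<epsilon> k - KS a S0 / (2 * a$k - \<epsilon> k)"
      proof -
        have "hh (a$k) (x$k) + Delta_a (a$k) = - KS a S0" using FFx 1 by linarith
        then have "(hh (a$k) (x$k) + Delta_a (a$k))/(2*a$k-\<epsilon> k) = - (KS a S0 / (2 * a$k - \<epsilon> k))"
          by simp
        then show ?thesis using pk by linarith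
      qed
      then have "x = (\<chi> i. if i = k then a$k - 1/2 + \<epsilon> k - KS a S0 / (2 * a$k - \<epsilon> k)
                               else base_coord a S0 \<epsilon> i)" using oth by (auto simp: vec_eq_iff)
      then have "(x,t) \<in> middle_vertices a"
        unfolding middle_vertices_def
        by (intro CollectI exI[of _ S0] exI[of _ \<epsilon>] exI[of _ k]) (simp add: t0 lab kS K1)
      then show ?thesis by simp
    next
      case 2
      define S where "S = S0 - {k}"
      have kS': "k \<notin> S" "insert k S = S0" using kS by (auto simp: S_def)
      have KI: "KS a S = KS a S0 + 2 * Delta_a (a$k)" using Kr by (simp add: S_def)
      have K1: "KS a (insert k S) < 1" "1 < KS a S" using FFx 2 pb KI kS'(2) by auto
      have "x$k = a$k - 1/2 + \<epsilon> k + (1 - KS a (insert k S)) / (2 * a$k - \<epsilon> k)"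
      proof -
        have "hh (a$k) (x$k) + Delta_a (a$k) = 1 - KS a (insert k S)" using FFx 2 kS'(2) by simp
        then have "(hh (a$k) (x$k) + Delta_a (a$k))/(2*a$k-\<epsilon> k) = (1 - KS a (insert k S)) / (2 * a$k - \<epsilon> k)"
          by simp
        then show ?thesis using pk by linarith
      qed
      moreover have "i \<noteq> k \<Longrightarrow> base_coord a S0 \<epsilon> i = base_coord a S \<epsilon> i" for i
        by (simp add: base_coord_def S_def)
      ultimately have "x = (\<chi> i. if i = k then a$k - 1/2 + \<epsilon> k + (1 - KS a (insert k S)) / (2 * a$k - \<epsilon> k)
                               else base_coord a S \<epsilon> i)" using oth by (auto simp: vec_eq_iff)
      moreover have "t \<in> {1,-1}" using tt 2 by auto
      moreover have "\<epsilon> k \<in> {0,1}" using ek by auto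
      ultimately have "(x,t) \<in> truncating_vertices a"
        unfolding truncating_vertices_def
        by (intro CollectI exI[of _ S] exI[of _ \<epsilon>] exI[of _ k] exI[of _ t]) (simp add: lab kS'(1) K1)
      then show ?thesis by simp
    next
      case 3
      obtain et sg where e1: "et > 0" "sg \<noteq> 0" "\<bar>sg\<bar> < 1" and L: "\<forall>s. \<bar>s\<bar> \<le> et \<longrightarrow>
           a$k-1/2 \<le> x$k+s \<and> x$k+s \<le> a$k+1/2 \<and> hh (a$k) (x$k+s) = hh (a$k) (x$k) + sg * s"
        using hh_loclin[OF ai[of k], of "x$k"] ik unfolding int_def by blast
      define al where "al = min et (min \<bar>t\<bar> (1 - FF a x))"
      have al: "al > 0" "al \<le> et" "al \<le> \<bar>t\<bar>" "al \<le> 1 - FF a x" using e1 3 tt by (auto simp: al_def)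
      have sa: "\<bar>sg * al\<bar> \<le> al"
      proof -
        have "\<bar>sg * al\<bar> = \<bar>sg\<bar> * al" using al by (simp add: abs_mult)
        also have "\<dots> \<le> al" using al e1 by (simp add: mult_left_le_one_le less_imp_le mult.commute)
        finally show ?thesis .
      qed
      define d where "d = (\<chi> j. if j = k then al else (0::real))"
      define u where "u = (if t \<ge> 0 then sg * al else - (sg * al))"
      have dk: "\<forall>j. j \<noteq> k \<longrightarrow> d$j = 0" by (simp add: d_def)
      have hp: "hh (a$k) (x$k + al) = hh (a$k) (x$k) + sg * al" using L[rule_format, of al] al by auto
      have hm: "hh (a$k) (x$k + - al) = hh (a$k) (x$k) + sg * (- al)" using L[rule_format, of "- al"] al by auto
      have Fp: "FF a (x + d) = FF a x + sg * al" using FF_single[OF dk] hp by (simp add: d_def)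
      have Fm: "FF a (x - d) = FF a x - sg * al" using FF_single'[OF dk] hm by (simp add: d_def)
      have "boxp a (x + d)" "boxp a (x - d)" unfolding boxp_def
        using bxi L[rule_format, of al] L[rule_format, of "- al"] al by (auto simp: d_def)
      moreover have "\<bar>t + u\<bar> \<le> 1 \<and> \<bar>t + u\<bar> \<le> FF a (x + d)" "\<bar>t - u\<bar> \<le> 1 \<and> \<bar>t - u\<bar> \<le> FF a (x - d)"
      proof -
        have sa2: "- al \<le> sg * al" "sg * al \<le> al" using sa by linarith+
        have q: "\<bar>t + u\<bar> = FF a x + sg * al \<and> \<bar>t - u\<bar> = FF a x - sg * al"
        proof (cases "t \<ge> 0")
          case True
          then have tu: "t = FF a x" "u = sg * al" using tt by (auto simp: u_def)
          have "t + u \<ge> 0" "t - u \<ge> 0" using tu sa2 al tt by linarith+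
          then show ?thesis using tu by simp
        next
          case False
          then have tu: "t = - FF a x" "u = - (sg * al)" using tt by (auto simp: u_def)
          have "t + u \<le> 0" "t - u \<le> 0" using tu sa2 al tt by linarith+
          then show ?thesis using tu by simp
        qed
        have "FF a x + sg * al \<le> 1" "FF a x - sg * al \<le> 1" using sa2 al by linarith+
        then show "\<bar>t + u\<bar> \<le> 1 \<and> \<bar>t + u\<bar> \<le> FF a (x + d)" "\<bar>t - u\<bar> \<le> 1 \<and> \<bar>t - u\<bar> \<le> FF a (x - d)"
          unfolding Fp Fm using q by simp_all
      qed
      ultimately have "(x + d, t + u) \<in> RP a" "(x - d, t - u) \<in> RP a" by (auto simp: RP_iff)
      then have "d = 0" using H' by blast
      then have "d$k = 0" by simp
      then show ?thesis using al by (simp add: d_def)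
    qed
  qed
qed

theorem theorem4p2:
  fixes a :: "real^'m"
  assumes "\<forall>i. 0 < a$i \<and> a$i < 1/2"
  shows "{v. v extreme_point_of RP a} =
           standard_vertices a \<union> middle_vertices a \<union> truncating_vertices a"
proof (intro set_eqI iffI)
  fix v assume "v \<in> {v. v extreme_point_of RP a}"
  then show "v \<in> standard_vertices a \<union> middle_vertices a \<union> truncating_vertices a"
    using ext_class[OF assms, of "fst v" "snd v"] by simp
next
  fix v assume "v \<in> standard_vertices a \<union> middle_vertices a \<union> truncating_vertices a"
  then consider "v \<in> standard_vertices a" | "v \<in> middle_vertices a" | "v \<in> truncating_vertices a" by blast
  then show "v \<in> {v. v extreme_point_of RP a}"
  proof cases
    case 1
    then obtain S \<epsilon> s where "v = ((\<chi> i. base_coord a S \<epsilon> i), s * KS a S)"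
      "labeled S \<epsilon>" "0 \<le> KS a S" "KS a S \<le> 1" "s \<in> {1, -1}"
      unfolding standard_vertices_def by blast
    then show ?thesis using std_ext[OF assms] by simp
  next
    case 2
    then obtain S \<epsilon> k where "v = ((\<chi> i. if i = k then a$k - 1/2 + \<epsilon> k - KS a S / (2 * a$k - \<epsilon> k)
                               else base_coord a S \<epsilon> i), 0)"
      "labeled S \<epsilon>" "k \<in> S" "KS a S < 0" "0 < KS a (S - {k})"
      unfolding middle_vertices_def by blast
    then show ?thesis using mid_ext[OF assms] by simp
  next
    case 3
    then obtain S \<epsilon> k s where "v = ((\<chi> i. if i = k then a$k - 1/2 + \<epsilon> k
                                 + (1 - KS a (insert k S)) / (2 * a$k - \<epsilon> k)
                               else base_coord a S \<epsilon> i), s)"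
      "labeled S \<epsilon>" "k \<notin> S" "\<epsilon> k \<in> {0,1}" "KS a (insert k S) < 1" "1 < KS a S" "s \<in> {1, -1}"
      unfolding truncating_vertices_def by blast
    then show ?thesis using trunc_ext[OF assms] by simp
  qed
qed

end
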